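(* Let $G$ be a finite simple graph on $[d]$. Then for every integer $k\ge0$, $H(R[G]/K_G,k)=\sum_{G'\in{\rm Ind}(G)}{\rm Kc}(G',k)$, and in particular ${\rm Kc}(G,k)=\sum_{m=0}^{d}(-1)^{d-m}\sum_{G'\in{\rm Ind}_m(G)}H(R[G']/K_{G'},k)$.
   Context: A $k$-coloring of a graph $H$ is a map $V(H)\to[k]$ giving adjacent vertices distinct colors (the graph with no vertices has exactly one $k$-coloring). Kempe switching: for colors $i<j$ and a connected component $C$ of $H[f^{-1}(i)\cup f^{-1}(j)]$, interchange $i$ and $j$ on $C$; Kempe equivalence is the equivalence relation generated by Kempe switchings, colorings differing by a permutation of colors being identified; ${\rm Kc}(H,k)$ is the number of Kempe equivalence classes of $k$-colorings of $H$. ${\rm Ind}(G)$ is the set of induced subgraphs $G[W]$, $W\subseteq[d]$ (so $|{\rm Ind}(G)|=2^d$), and ${\rm Ind}_m(G)$ those with $|W|=m$. For a graph $G'$ on a finite vertex set $V$: a stable set is a subset of $V$ with no edge (including $\emptyset$); $R[G']=\mathbb{K}[x_S : S \text{ stable in } G']$ over a field $\mathbb{K}$ with all variables of degree $1$; $J_{G'}$ is generated by all $x_{S_1}x_{S_2}-x_{S_3}x_{S_4}$ with $S_i$ stable, $S_1\cap S_2=S_3\cap S_4=\emptyset$, $S_1\cup S_2=S_3\cup S_4$; $M_{G'}=\langle x_Sx_T : S\cap T\neq\emptyset\rangle$; $K_{G'}=J_{G'}+M_{G'}$. For a graded ideal $I$ of a graded polynomial ring $R$, $H(R/I,k)=\dim_{\mathbb{K}}R_k/I_k$.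 *)

theory Defs
  imports Main HOL.Vector_Spaces "HOL-Library.FuncSet" "HOL-Library.Multiset" "HOL-Library.Function_Algebras"
begin

text \<open>Graphs: a vertex set V (a set of naturals) and an edge set E of 2-element subsets.
  The graph G on [d] is ({1..d}, E); the induced subgraph G[W] is (W, induced_edges E W).\<close>

definition simple_graph_on :: "nat set \<Rightarrow> nat set set \<Rightarrow> bool" where
  "simple_graph_on V E \<longleftrightarrow> (\<forall>e\<in>E. \<exists>u v. e = {u, v} \<and> u \<noteq> v \<and> u \<in> V \<and> v \<in> V)"

definition induced_edges :: "nat set set \<Rightarrow> nat set \<Rightarrow> nat set set" where
  "induced_edges E W = {e \<in> E. e \<subseteq> W}"

definition adj :: "nat set set \<Rightarrow> nat \<Rightarrow> nat \<Rightarrow> bool" where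
  "adj E u v \<longleftrightarrow> u \<noteq> v \<and> {u, v} \<in> E"

definition colorings :: "nat set \<Rightarrow> nat set set \<Rightarrow> nat \<Rightarrow> (nat \<Rightarrow> nat) set" where
  "colorings V E k = {f \<in> V \<rightarrow>\<^sub>E {1..k}. \<forall>u\<in>V. \<forall>v\<in>V. adj E u v \<longrightarrow> f u \<noteq> f v}"

definition kempe_component :: "nat set \<Rightarrow> nat set set \<Rightarrow> (nat \<Rightarrow> nat) \<Rightarrow> nat \<Rightarrow> nat \<Rightarrow> nat set \<Rightarrow> bool" where
  "kempe_component V E f i j C \<longleftrightarrow>
     (\<exists>v\<in>V. f v \<in> {i, j} \<and>
        C = {w \<in> V. f w \<in> {i, j} \<and>
               (v, w) \<in> {(x, y). x \<in> V \<and> y \<in> V \<and> f x \<in> {i, j} \<and> f y \<in> {i, j} \<and> adj E x y}\<^sup>*})"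

definition kempe_switch :: "(nat \<Rightarrow> nat) \<Rightarrow> nat \<Rightarrow> nat \<Rightarrow> nat set \<Rightarrow> (nat \<Rightarrow> nat)" where
  "kempe_switch f i j C = (\<lambda>x. if x \<in> C then (if f x = i then j else if f x = j then i else f x) else f x)"

definition kempe_step :: "nat set \<Rightarrow> nat set set \<Rightarrow> nat \<Rightarrow> ((nat \<Rightarrow> nat) \<times> (nat \<Rightarrow> nat)) set" where
  "kempe_step V E k = {(f, g). f \<in> colorings V E k \<and>
     ((\<exists>i j C. 1 \<le> i \<and> i < j \<and> j \<le> k \<and> kempe_component V E f i j C \<and> g = kempe_switch f i j C)
      \<or> (\<exists>\<sigma>. bij_betw \<sigma> {1..k} {1..k} \<and> g = restrict (\<sigma> \<circ> f) V))}"

definition kempe_equiv :: "nat set \<Rightarrow> nat set set \<Rightarrow> nat \<Rightarrow> ((nat \<Rightarrow> nat) \<times> (nat \<Rightarrow> nat)) set" where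
  "kempe_equiv V E k = ((kempe_step V E k \<union> (kempe_step V E k)\<inverse>)\<^sup>*) \<inter> (colorings V E k \<times> colorings V E k)"

definition Kc :: "nat set \<Rightarrow> nat set set \<Rightarrow> nat \<Rightarrow> nat" where
  "Kc V E k = card (colorings V E k // kempe_equiv V E k)"

definition stable :: "nat set \<Rightarrow> nat set set \<Rightarrow> nat set \<Rightarrow> bool" where
  "stable V E S \<longleftrightarrow> S \<subseteq> V \<and> (\<forall>u\<in>S. \<forall>v\<in>S. \<not> adj E u v)"

definition stables :: "nat set \<Rightarrow> nat set set \<Rightarrow> nat set set" where
  "stables V E = {S. stable V E S}"

text \<open>Polynomials in the variables x_S (S stable) are represented by their coefficient
  functions on monomials, monomials being multisets of variables (= stable sets).\<close>

definition fscale :: "'a::field \<Rightarrow> ('m \<Rightarrow> 'a) \<Rightarrow> ('m \<Rightarrow> 'a)" where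
  "fscale c p = (\<lambda>x. c * p x)"

definition monomials_deg :: "'v set \<Rightarrow> nat \<Rightarrow> 'v multiset set" where
  "monomials_deg X k = {M. set_mset M \<subseteq> X \<and> size M = k}"

definition mono_ind :: "'v multiset \<Rightarrow> 'v multiset \<Rightarrow> 'a::field" where
  "mono_ind M = (\<lambda>N. if N = M then 1 else 0)"

definition Rdeg :: "'v set \<Rightarrow> nat \<Rightarrow> ('v multiset \<Rightarrow> 'a::field) set" where
  "Rdeg X k = {p. \<forall>N. N \<notin> monomials_deg X k \<longrightarrow> p N = 0}"

text \<open>Spanning set of (K_G)_k: monomials of degree k-2 times the quadratic generators
  of J_G (binomials) and of M_G (monomials).\<close>
definition Kgens :: "nat set \<Rightarrow> nat set set \<Rightarrow> nat \<Rightarrow> (nat set multiset \<Rightarrow> 'a::field) set" where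
  "Kgens V E k =
     {mono_ind (m + {#S1, S2#}) - mono_ind (m + {#S3, S4#}) | m S1 S2 S3 S4.
        m \<in> monomials_deg (stables V E) (k - 2) \<and> 2 \<le> k \<and>
        S1 \<in> stables V E \<and> S2 \<in> stables V E \<and> S3 \<in> stables V E \<and> S4 \<in> stables V E \<and>
        S1 \<inter> S2 = {} \<and> S3 \<inter> S4 = {} \<and> S1 \<union> S2 = S3 \<union> S4}
   \<union> {mono_ind (m + {#S, T#}) | m S T.
        m \<in> monomials_deg (stables V E) (k - 2) \<and> 2 \<le> k \<and>
        S \<in> stables V E \<and> T \<in> stables V E \<and> S \<inter> T \<noteq> {}}"

definition hilbK :: "'a::field itself \<Rightarrow> nat set \<Rightarrow> nat set set \<Rightarrow> nat \<Rightarrow> nat" where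
  "hilbK _ V E k =
     vector_space.dim (fscale :: 'a \<Rightarrow> _) (Rdeg (stables V E) k :: (nat set multiset \<Rightarrow> 'a) set)
     - vector_space.dim (fscale :: 'a \<Rightarrow> _) (Kgens V E k :: (nat set multiset \<Rightarrow> 'a) set)"

lemma vector_space_fscale: "vector_space (fscale :: 'a::field \<Rightarrow> ('m \<Rightarrow> 'a) \<Rightarrow> _)"
  by unfold_locales (auto simp: fscale_def fun_eq_iff algebra_simps)

end

theory Submission
  imports Defs
begin

lemma fun_sum_apply: "(sum f A) x = (\<Sum>a\<in>A. f a x)"
  by (induction A rule: infinite_finite_induct) auto

lemma fscale_apply: "fscale c p x = c * p x"
  by (simp add: fscale_def)

lemma indep_pivot:
  fixes v :: "'i \<Rightarrow> 'm \<Rightarrow> 'a::field"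
  assumes fin: "finite I" and nz: "\<forall>i\<in>I. v i (piv i) \<noteq> 0"
    and z: "\<forall>i\<in>I. \<forall>j\<in>I. j \<noteq> i \<longrightarrow> v j (piv i) = 0"
  shows "\<not> module.dependent fscale (v ` I) \<and> inj_on v I"
proof -
  interpret vs: vector_space "fscale :: 'a \<Rightarrow> ('m \<Rightarrow> 'a) \<Rightarrow> _" by (rule vector_space_fscale)
  have inj: "inj_on v I"
  proof (rule inj_onI)
    fix i j assume "i \<in> I" "j \<in> I" "v i = v j"
    then show "i = j" using nz z by (metis)
  qed
  have "\<not> vs.dependent (v ` I)"
  proof
    assume "vs.dependent (v ` I)"
    then obtain u where u: "\<exists>w\<in>v ` I. u w \<noteq> 0" "(\<Sum>w\<in>v ` I. fscale (u w) w) = 0"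
      using vs.dependent_finite fin by blast
    then obtain i0 where i0: "i0 \<in> I" "u (v i0) \<noteq> 0" by blast
    have "0 = (\<Sum>w\<in>v ` I. fscale (u w) w) (piv i0)" using u by simp
    also have "\<dots> = (\<Sum>i\<in>I. u (v i) * v i (piv i0))"
      by (simp add: fun_sum_apply fscale_apply sum.reindex[OF inj])
    also have "\<dots> = u (v i0) * v i0 (piv i0)"
      using i0 z fin by (subst sum.remove[of _ i0]) (auto intro!: sum.neutral)
    finally show False using i0 nz by simp
  qed
  then show ?thesis using inj by simp
qed

lemma dim_count:
  fixes Mon :: "'v multiset set" and Bad :: "'v multiset set" and r :: "'v multiset \<Rightarrow> 'v multiset"
    and Gen :: "('v multiset \<Rightarrow> 'a::field) set"
  assumes fin: "finite Mon" and bad: "Bad \<subseteq> Mon"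
    and rr: "\<forall>N\<in>Mon-Bad. r N \<in> Mon-Bad \<and> r (r N) = r N"
    and g1: "Gen \<subseteq> module.span fscale (mono_ind ` Bad \<union> (\<lambda>N. mono_ind N - mono_ind (r N)) ` {N\<in>Mon-Bad. r N \<noteq> N})"
    and g2: "mono_ind ` Bad \<union> (\<lambda>N. mono_ind N - mono_ind (r N)) ` {N\<in>Mon-Bad. r N \<noteq> N} \<subseteq> module.span fscale Gen"
  shows "vector_space.dim fscale {p::'v multiset\<Rightarrow>'a. \<forall>N. N\<notin>Mon \<longrightarrow> p N = 0} - vector_space.dim fscale Gen
     = card (r ` (Mon - Bad))"
proof -
  interpret vs: vector_space "fscale :: 'a \<Rightarrow> ('v multiset \<Rightarrow> 'a) \<Rightarrow> _" by (rule vector_space_fscale)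
  define Bk :: "('v multiset \<Rightarrow> 'a) set" where "Bk = mono_ind ` Bad \<union> (\<lambda>N. mono_ind N - mono_ind (r N)) ` {N\<in>Mon-Bad. r N \<noteq> N}"
  define D where "D = {N\<in>Mon-Bad. r N \<noteq> N}"
  define v where "v = (\<lambda>N. if N \<in> Bad then mono_ind N else mono_ind N - mono_ind (r N) :: 'v multiset \<Rightarrow> 'a)"
  have finB: "finite Bad" using fin bad finite_subset by blast
  have finD: "finite D" using fin D_def by simp
  have BkV: "Bk = v ` (Bad \<union> D)"
    unfolding Bk_def v_def D_def by (auto simp: image_def)
  have "\<not> vs.dependent (v ` (Bad \<union> D)) \<and> inj_on v (Bad \<union> D)"
  proof (rule indep_pivot[where piv = id])
    show "finite (Bad \<union> D)" using finB finD by simp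
    show "\<forall>i\<in>Bad \<union> D. v i (id i) \<noteq> 0"
      by (auto simp: v_def mono_ind_def D_def)
    show "\<forall>i\<in>Bad \<union> D. \<forall>j\<in>Bad \<union> D. j \<noteq> i \<longrightarrow> v j (id i) = 0"
    proof (intro ballI impI)
      fix i j assume i: "i \<in> Bad \<union> D" and j: "j \<in> Bad \<union> D" and ji: "j \<noteq> i"
      show "v j (id i) = 0"
      proof (cases "j \<in> Bad")
        case True then show ?thesis using ji by (simp add: v_def mono_ind_def)
      next
        case False
        then have jD: "j \<in> D" using j by auto
        have "r j \<noteq> i"
        proof
          assume "r j = i"
          then have "r i = i" using rr jD D_def by auto
          moreover have "i \<notin> Bad" using \<open>r j = i\<close> rr jD D_def by auto
          ultimately show False using i D_def by auto
        qed
        then show ?thesis using False ji by (simp add: v_def mono_ind_def)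
      qed
    qed
  qed
  then have indK: "\<not> vs.dependent Bk" and cardK: "card Bk = card (Bad \<union> D)"
    using BkV card_image by auto
  have dimG: "vs.dim Gen = card Bk"
  proof -
    have "vs.span Gen = vs.span Bk"
      using g1 g2 unfolding Bk_def[symmetric] vs.span_eq by simp
    then have "vs.dim Gen = vs.dim Bk" by (rule vs.span_eq_dim)
    then show ?thesis using vs.dim_eq_card_independent[OF indK] by simp
  qed
  have "\<not> vs.dependent (mono_ind ` Mon :: ('v multiset \<Rightarrow> 'a) set) \<and> inj_on (mono_ind :: _ \<Rightarrow> 'v multiset \<Rightarrow> 'a) Mon"
    by (rule indep_pivot[where piv = id]) (auto simp: fin mono_ind_def)
  then have ind1: "\<not> vs.dependent (mono_ind ` Mon :: ('v multiset \<Rightarrow> 'a) set)"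
    and card1: "card (mono_ind ` Mon :: ('v multiset \<Rightarrow> 'a) set) = card Mon"
    using card_image by auto
  have dimR: "vs.dim {p::'v multiset\<Rightarrow>'a. \<forall>N. N\<notin>Mon \<longrightarrow> p N = 0} = card Mon"
  proof (rule vs.dim_unique[OF _ _ ind1 card1])
    show "mono_ind ` Mon \<subseteq> {p::'v multiset\<Rightarrow>'a. \<forall>N. N\<notin>Mon \<longrightarrow> p N = 0}"
      by (auto simp: mono_ind_def)
    show "{p::'v multiset\<Rightarrow>'a. \<forall>N. N\<notin>Mon \<longrightarrow> p N = 0} \<subseteq> vs.span (mono_ind ` Mon)"
    proof
      fix p :: "'v multiset \<Rightarrow> 'a" assume "p \<in> {p. \<forall>N. N\<notin>Mon \<longrightarrow> p N = 0}"
      then have p0: "\<forall>N. N\<notin>Mon \<longrightarrow> p N = 0" by simp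
      have "p = (\<Sum>N\<in>Mon. fscale (p N) (mono_ind N))"
      proof
        fix M
        show "p M = (\<Sum>N\<in>Mon. fscale (p N) (mono_ind N)) M"
          using p0 fin by (cases "M \<in> Mon") (auto simp: fun_sum_apply fscale_apply mono_ind_def if_distrib[where f="\<lambda>x. _ * x"] sum.delta cong: if_cong)
      qed
      also have "\<dots> \<in> vs.span (mono_ind ` Mon)"
        by (intro vs.span_sum vs.span_scale vs.span_base) auto
      finally show "p \<in> vs.span (mono_ind ` Mon)" .
    qed
  qed
  have fix_eq: "r ` (Mon - Bad) = {N\<in>Mon-Bad. r N = N}"
    using rr by (auto simp: image_def) (metis DiffI)
  have "card (Mon - Bad) = card D + card {N\<in>Mon-Bad. r N = N}"
    unfolding D_def using fin by (subst card_Un_disjoint[symmetric]) (auto intro: arg_cong[where f=card])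
  moreover have "card Mon = card Bad + card (Mon - Bad)"
    using fin bad by (metis card_Diff_subset finB card_mono le_add_diff_inverse)
  moreover have "card (Bad \<union> D) = card Bad + card D"
    using finB finD by (subst card_Un_disjoint) (auto simp: D_def)
  ultimately show ?thesis
    using dimR dimG cardK fix_eq by simp
qed

lemma img_remove:
  assumes "finite K" "i \<in> K"
  shows "image_mset F (mset_set K) = add_mset (F i) (image_mset F (mset_set (K - {i})))"
  using mset_set.remove[OF assms] by simp

lemma img_split2:
  assumes "finite K" "i \<in> K" "j \<in> K" "i \<noteq> j"
  shows "image_mset F (mset_set K) = image_mset F (mset_set (K - {i, j})) + {#F i, F j#}"
proof -
  have "image_mset F (mset_set K) = add_mset (F i) (image_mset F (mset_set (K - {i})))"
    by (rule img_remove[OF assms(1,2)])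
  also have "image_mset F (mset_set (K - {i})) = add_mset (F j) (image_mset F (mset_set (K - {i} - {j})))"
    using assms by (intro img_remove) auto
  also have "K - {i} - {j} = K - {i, j}" by auto
  finally show ?thesis by simp
qed

lemma two_idx:
  assumes "finite K" "image_mset F (mset_set K) = m + {#S, T#}"
  shows "\<exists>i\<in>K. \<exists>j\<in>K. i \<noteq> j \<and> F i = S \<and> F j = T \<and> m = image_mset F (mset_set (K - {i, j}))"
proof -
  have "S \<in># image_mset F (mset_set K)" using assms(2) by simp
  then obtain i where i: "i \<in> K" "F i = S" using assms(1) by auto
  have e1: "image_mset F (mset_set (K - {i})) = add_mset T m"
    using img_remove[OF assms(1) i(1), of F] assms(2) i(2) by simp
  then have "T \<in># image_mset F (mset_set (K - {i}))" by simp
  then obtain j where j: "j \<in> K - {i}" "F j = T" using assms(1) by auto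
  have "image_mset F (mset_set (K - {i})) = add_mset (F j) (image_mset F (mset_set (K - {i} - {j})))"
    using assms(1) j by (intro img_remove) auto
  then have "m = image_mset F (mset_set (K - {i} - {j}))" using e1 j(2) by simp
  also have "K - {i} - {j} = K - {i, j}" by auto
  finally have "m = image_mset F (mset_set (K - {i, j}))" .
  moreover have "j \<in> K" "i \<noteq> j" using j by auto
  ultimately have c: "i \<noteq> j \<and> F i = S \<and> F j = T \<and> m = image_mset F (mset_set (K - {i, j}))"
    using i j(2) by simp
  show ?thesis
    by (rule bexI[of _ i], rule bexI[of _ j]) (use c i(1) \<open>j \<in> K\<close> in simp_all)
qed

lemma img_perm:
  assumes "finite K" "finite L" "image_mset F (mset_set K) = image_mset G (mset_set L)"
  shows "\<exists>\<sigma>. bij_betw \<sigma> K L \<and> (\<forall>i\<in>K. G (\<sigma> i) = F i)"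
  using assms
proof (induction K arbitrary: L rule: finite_induct)
  case empty
  have "size (image_mset F (mset_set {})) = size (image_mset G (mset_set L))"
    using empty.prems(2) by (rule arg_cong)
  then have "card L = 0" by (simp only: size_image_mset size_mset_set card.empty)
  then have "L = {}" using empty.prems(1) by simp
  then show ?case by (auto simp: bij_betw_def)
next
  case (insert a K)
  have finL: "finite L" by (rule insert.prems(1))
  have e: "add_mset (F a) (image_mset F (mset_set K)) = image_mset G (mset_set L)"
    using insert.prems(2) insert.hyps by simp
  have "F a \<in># image_mset G (mset_set L)" unfolding e[symmetric] by simp
  then obtain b where b: "b \<in> L" "G b = F a" using finL by auto
  have e2: "image_mset G (mset_set L) = add_mset (F a) (image_mset G (mset_set (L - {b})))"
    using img_remove[OF finL b(1), of G] b(2) by simp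
  have eq: "image_mset F (mset_set K) = image_mset G (mset_set (L - {b}))"
    using e e2 by simp
  have finL': "finite (L - {b})" using finL by simp
  obtain \<sigma> where s: "bij_betw \<sigma> K (L - {b})" "\<forall>i\<in>K. G (\<sigma> i) = F i"
    using insert.IH[OF finL' eq] by blast
  define \<tau> where "\<tau> = \<sigma>(a := b)"
  have ta: "\<tau> a = b" by (simp add: \<tau>_def)
  have tk: "\<tau> x = \<sigma> x" if "x \<in> K" for x using that insert.hyps(2) by (auto simp: \<tau>_def)
  have sK: "\<sigma> ` K = L - {b}" using s(1) by (simp add: bij_betw_def)
  have sinj: "inj_on \<sigma> K" using s(1) by (simp add: bij_betw_def)
  have tK: "\<tau> ` K = L - {b}" using tk sK by (metis image_cong)
  have "inj_on \<tau> (insert a K)"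
  proof (rule inj_onI)
    fix x y assume x: "x \<in> insert a K" and y: "y \<in> insert a K" and xy: "\<tau> x = \<tau> y"
    show "x = y"
    proof (cases "x = a")
      case True
      show ?thesis
      proof (rule ccontr)
        assume "x \<noteq> y"
        then have "y \<in> K" using y True by simp
        then have "\<tau> y \<in> L - {b}" using tK by blast
        then show False using xy True ta by simp
      qed
    next
      case False
      then have xK: "x \<in> K" using x by simp
      show ?thesis
      proof (cases "y = a")
        case True
        have "\<tau> x \<in> L - {b}" using tK xK by blast
        then show ?thesis using xy True ta by simp
      next
        case False
        then have yK: "y \<in> K" using y by simp
        then show ?thesis using xK xy tk sinj by (metis inj_onD)
      qed
    qed
  qed
  moreover have "\<tau> ` insert a K = L"
  proof -
    have "\<tau> ` insert a K = insert b (\<tau> ` K)" using ta by simp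
    also have "\<dots> = L" using tK b(1) by auto
    finally show ?thesis .
  qed
  ultimately have "bij_betw \<tau> (insert a K) L" by (simp add: bij_betw_def)
  moreover have "\<forall>i\<in>insert a K. G (\<tau> i) = F i" using s(2) tk ta b(2) by simp
  ultimately show ?case by blast
qed

definition isbad :: "'v set multiset \<Rightarrow> bool" where
  "isbad N \<longleftrightarrow> (\<exists>m S T. N = m + {#S, T#} \<and> S \<inter> T \<noteq> {})"

definition cnt :: "'v set multiset \<Rightarrow> 'v \<Rightarrow> nat" where
  "cnt N x = size (filter_mset (\<lambda>S. x \<in> S) N)"

definition mv :: "'v set set \<Rightarrow> nat \<Rightarrow> ('v set multiset \<times> 'v set multiset) set" where
  "mv X k = {(A, B). \<exists>m S1 S2 S3 S4. m \<in> monomials_deg X (k - 2) \<and> 2 \<le> k \<and>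
     S1 \<in> X \<and> S2 \<in> X \<and> S3 \<in> X \<and> S4 \<in> X \<and> S1 \<inter> S2 = {} \<and> S3 \<inter> S4 = {} \<and>
     S1 \<union> S2 = S3 \<union> S4 \<and> A = m + {#S1, S2#} \<and> B = m + {#S3, S4#}}"

lemma bad_cnt: "isbad N \<longleftrightarrow> (\<exists>x. 2 \<le> cnt N x)"
proof
  assume "isbad N"
  then obtain m S T x where N: "N = m + {#S, T#}" "x \<in> S" "x \<in> T"
    unfolding isbad_def by blast
  then have "cnt N x = size (filter_mset (\<lambda>S. x \<in> S) m) + 2" by (simp add: cnt_def)
  then show "\<exists>x. 2 \<le> cnt N x" by (intro exI[of _ x]) simp
next
  assume "\<exists>x. 2 \<le> cnt N x"
  then obtain x where x: "2 \<le> size (filter_mset (\<lambda>S. x \<in> S) N)" by (auto simp: cnt_def)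
  define P where "P = filter_mset (\<lambda>S. x \<in> S) N"
  have "size P \<ge> 2" using x P_def by simp
  then have "P \<noteq> {#}" by (metis not_numeral_le_zero size_empty)
  then obtain S where S: "S \<in># P" by (meson multiset_nonemptyE)
  have "size (P - {#S#}) \<ge> 1" using x S P_def by (simp add: size_Diff_submset)
  then have "P - {#S#} \<noteq> {#}" by auto
  then obtain T where T: "T \<in># P - {#S#}" by (meson multiset_nonemptyE)
  have sub: "{#S, T#} \<subseteq># P"
    using S T by (metis add_mset_add_single insert_DiffM insert_subset_eq_iff mset_subset_eq_add_mset_cancel single_subset_iff subset_mset.zero_le)
  have "P \<subseteq># N" unfolding P_def by simp
  then have sub2: "{#S, T#} \<subseteq># N" using sub by (meson subset_mset.order_trans)
  have "x \<in> S" "x \<in> T" using S T P_def by (auto dest: in_diffD)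
  moreover have "N = (N - {#S, T#}) + {#S, T#}" using sub2 by (metis subset_mset.diff_add)
  ultimately show "isbad N" unfolding isbad_def by blast
qed

lemma cnt_add2: "S1 \<inter> S2 = {} \<Longrightarrow> cnt (m + {#S1, S2#}) x = cnt m x + (if x \<in> S1 \<union> S2 then 1 else 0)"
  by (auto simp: cnt_def)

lemma mv_cnt: "(A, B) \<in> mv X k \<Longrightarrow> cnt A x = cnt B x"
proof -
  assume "(A, B) \<in> mv X k"
  then obtain m S1 S2 S3 S4 where "S1 \<inter> S2 = {}" "S3 \<inter> S4 = {}" "S1 \<union> S2 = S3 \<union> S4"
    "A = m + {#S1, S2#}" "B = m + {#S3, S4#}" unfolding mv_def by blast
  then show ?thesis using cnt_add2[of S1 S2 m x] cnt_add2[of S3 S4 m x] by simp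
qed

lemma mv_union: "(A, B) \<in> mv X k \<Longrightarrow> \<Union>(set_mset A) = \<Union>(set_mset B)"
  unfolding mv_def by auto

lemma mv_sym: "(A, B) \<in> mv X k \<Longrightarrow> (B, A) \<in> mv X k"
  unfolding mv_def by blast

lemma mv_Mon: "(A, B) \<in> mv X k \<Longrightarrow> A \<in> monomials_deg X k \<and> B \<in> monomials_deg X k"
  unfolding mv_def monomials_deg_def by auto

lemma mvs_inv: "(A, B) \<in> (mv X k)\<^sup>* \<Longrightarrow> cnt A x = cnt B x \<and> \<Union>(set_mset A) = \<Union>(set_mset B) \<and> (B, A) \<in> (mv X k)\<^sup>*"
proof (induction rule: rtrancl_induct)
  case base then show ?case by simp
next
  case (step y z)
  then show ?case using mv_cnt[OF step(2)] mv_union[OF step(2)] mv_sym[OF step(2)]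
    by (metis converse_rtrancl_into_rtrancl)
qed

lemma mvs_cnt: "(A, B) \<in> (mv X k)\<^sup>* \<Longrightarrow> cnt A x = cnt B x"
  by (rule conjunct1[OF mvs_inv])

lemma mvs_un: "(A, B) \<in> (mv X k)\<^sup>* \<Longrightarrow> \<Union>(set_mset A) = \<Union>(set_mset B)"
  by (rule conjunct1[OF conjunct2[OF mvs_inv]])

lemma mvs_sym: "(A, B) \<in> (mv X k)\<^sup>* \<Longrightarrow> (B, A) \<in> (mv X k)\<^sup>*"
  by (rule conjunct2[OF conjunct2[OF mvs_inv]])

lemma mvs_bad: "(A, B) \<in> (mv X k)\<^sup>* \<Longrightarrow> isbad A \<longleftrightarrow> isbad B"
  unfolding bad_cnt using mvs_cnt by metis

lemma mvs_Mon: "(A, B) \<in> (mv X k)\<^sup>* \<Longrightarrow> A \<in> monomials_deg X k \<Longrightarrow> B \<in> monomials_deg X k"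
  by (induction rule: rtrancl_induct) (auto dest: mv_Mon)

definition rep :: "'v set set \<Rightarrow> nat \<Rightarrow> 'v set multiset \<Rightarrow> 'v set multiset" where
  "rep X k N = (SOME N'. (N, N') \<in> (mv X k)\<^sup>*)"

lemma rep_R: "(N, rep X k N) \<in> (mv X k)\<^sup>*"
  unfolding rep_def by (rule someI[where x = N]) simp

lemma rep_eq: "(A, B) \<in> (mv X k)\<^sup>* \<Longrightarrow> rep X k A = rep X k B"
proof -
  assume ab: "(A, B) \<in> (mv X k)\<^sup>*"
  then have ba: "(B, A) \<in> (mv X k)\<^sup>*" by (rule mvs_sym)
  have "\<And>N'. (A, N') \<in> (mv X k)\<^sup>* \<longleftrightarrow> (B, N') \<in> (mv X k)\<^sup>*"
    using ab ba by (meson rtrancl_trans)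
  then show ?thesis unfolding rep_def by simp
qed

lemma rep_iff: "rep X k A = rep X k B \<longleftrightarrow> (A, B) \<in> (mv X k)\<^sup>*"
proof
  assume "rep X k A = rep X k B"
  then have "(A, rep X k B) \<in> (mv X k)\<^sup>*" using rep_R by metis
  moreover have "(rep X k B, B) \<in> (mv X k)\<^sup>*" using rep_R by (rule mvs_sym)
  ultimately show "(A, B) \<in> (mv X k)\<^sup>*" by (rule rtrancl_trans)
qed (rule rep_eq)

lemma finite_stables: "finite V \<Longrightarrow> finite (stables V E)"
  by (rule finite_subset[of _ "Pow V"]) (auto simp: stables_def stable_def)

lemma finite_monomials: "finite X \<Longrightarrow> finite (monomials_deg X k)"
  using finite_multisets_of_size[of X k] by (simp add: monomials_deg_def multisets_of_size_def)

lemma bad_decomp: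
  assumes "N \<in> monomials_deg X k" "isbad N"
  shows "\<exists>m S T. m \<in> monomials_deg X (k - 2) \<and> 2 \<le> k \<and> S \<in> X \<and> T \<in> X \<and> S \<inter> T \<noteq> {} \<and> N = m + {#S, T#}"
proof -
  obtain m S T where N: "N = m + {#S, T#}" "S \<inter> T \<noteq> {}" using assms(2) unfolding isbad_def by blast
  then show ?thesis using assms(1) unfolding monomials_deg_def
    by (intro exI[of _ m] exI[of _ S] exI[of _ T]) auto
qed

lemma hilb_count:
  fixes V :: "nat set" and E :: "nat set set" and k :: nat
  assumes finV: "finite V"
  shows "hilbK TYPE('a::field) V E k = card (rep (stables V E) k ` {N \<in> monomials_deg (stables V E) k. \<not> isbad N})"
proof -
  interpret vs: vector_space "fscale :: 'a \<Rightarrow> (nat set multiset \<Rightarrow> 'a) \<Rightarrow> _" by (rule vector_space_fscale)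
  define X where "X = stables V E"
  define Mon where "Mon = monomials_deg X k"
  define Bad where "Bad = {N \<in> Mon. isbad N}"
  define r where "r = rep X k"
  define Bk :: "(nat set multiset \<Rightarrow> 'a) set" where
    "Bk = mono_ind ` Bad \<union> (\<lambda>N. mono_ind N - mono_ind (r N)) ` {N\<in>Mon-Bad. r N \<noteq> N}"
  have MB: "Mon - Bad = {N \<in> Mon. \<not> isbad N}" unfolding Bad_def by auto
  have finM: "finite Mon" unfolding Mon_def X_def using finV by (intro finite_monomials finite_stables)
  have rr: "\<forall>N\<in>Mon-Bad. r N \<in> Mon-Bad \<and> r (r N) = r N"
  proof
    fix N assume "N \<in> Mon - Bad"
    then have N: "N \<in> Mon" "\<not> isbad N" by (auto simp: Bad_def)
    have R: "(N, r N) \<in> (mv X k)\<^sup>*" using rep_R r_def by metis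
    have "r N \<in> Mon" using mvs_Mon[OF R] N Mon_def by auto
    moreover have "\<not> isbad (r N)" using mvs_bad[OF R] N by simp
    moreover have "r (r N) = r N" using rep_eq[OF R] r_def by metis
    ultimately show "r N \<in> Mon-Bad \<and> r (r N) = r N" by (simp add: Bad_def)
  qed
  have h1: "mono_ind N \<in> vs.span Bk" if "N \<in> Mon" "isbad N" for N
    using that by (intro vs.span_base) (auto simp: Bk_def Bad_def)
  have h2: "mono_ind N - mono_ind (r N) \<in> vs.span Bk" if "N \<in> Mon" "\<not> isbad N" for N
  proof (cases "r N = N")
    case True then show ?thesis using vs.span_zero by simp
  next
    case False then show ?thesis using that by (intro vs.span_base) (auto simp: Bk_def Bad_def)
  qed
  have g1: "Kgens V E k \<subseteq> vs.span Bk"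
  proof
    fix p :: "nat set multiset \<Rightarrow> 'a" assume "p \<in> Kgens V E k"
    then have "p \<in> {mono_ind (m + {#S1, S2#}) - mono_ind (m + {#S3, S4#}) | m S1 S2 S3 S4.
        m \<in> monomials_deg X (k - 2) \<and> 2 \<le> k \<and>
        S1 \<in> X \<and> S2 \<in> X \<and> S3 \<in> X \<and> S4 \<in> X \<and>
        S1 \<inter> S2 = {} \<and> S3 \<inter> S4 = {} \<and> S1 \<union> S2 = S3 \<union> S4}
      \<or> p \<in> {mono_ind (m + {#S, T#}) | m S T.
        m \<in> monomials_deg X (k - 2) \<and> 2 \<le> k \<and>
        S \<in> X \<and> T \<in> X \<and> S \<inter> T \<noteq> {}}"
      unfolding Kgens_def X_def by (simp only: Un_iff)
    then consider (bin) A B where "(A, B) \<in> mv X k" "p = mono_ind A - mono_ind B"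
      | (mon) m S T where "m \<in> monomials_deg X (k - 2)" "2 \<le> k" "S \<in> X" "T \<in> X" "S \<inter> T \<noteq> {}"
          "p = mono_ind (m + {#S, T#})"
    proof (elim disjE)
      assume "p \<in> {mono_ind (m + {#S1, S2#}) - mono_ind (m + {#S3, S4#}) | m S1 S2 S3 S4.
        m \<in> monomials_deg X (k - 2) \<and> 2 \<le> k \<and>
        S1 \<in> X \<and> S2 \<in> X \<and> S3 \<in> X \<and> S4 \<in> X \<and>
        S1 \<inter> S2 = {} \<and> S3 \<inter> S4 = {} \<and> S1 \<union> S2 = S3 \<union> S4}"
      then obtain m S1 S2 S3 S4 where c: "m \<in> monomials_deg X (k - 2)" "2 \<le> k"
        "S1 \<in> X" "S2 \<in> X" "S3 \<in> X" "S4 \<in> X"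
        "S1 \<inter> S2 = {}" "S3 \<inter> S4 = {}" "S1 \<union> S2 = S3 \<union> S4"
        "p = mono_ind (m + {#S1, S2#}) - mono_ind (m + {#S3, S4#})" by blast
      have "(m + {#S1, S2#}, m + {#S3, S4#}) \<in> mv X k"
        unfolding mv_def using c(1-9) by blast
      then show thesis using c(10) bin by blast
    next
      assume "p \<in> {mono_ind (m + {#S, T#}) | m S T.
        m \<in> monomials_deg X (k - 2) \<and> 2 \<le> k \<and>
        S \<in> X \<and> T \<in> X \<and> S \<inter> T \<noteq> {}}"
      then show thesis using mon by blast
    qed
    then show "p \<in> vs.span Bk"
    proof cases
      case bin
      have AB: "A \<in> Mon" "B \<in> Mon" using mv_Mon[OF bin(1)] Mon_def by auto
      have bb: "isbad A \<longleftrightarrow> isbad B" using mvs_bad[of A B X k] bin(1) by auto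
      show ?thesis
      proof (cases "isbad A")
        case True
        then show ?thesis using bin(2) AB bb h1 vs.span_diff by metis
      next
        case False
        have "r A = r B" unfolding r_def using bin(1) by (intro rep_eq) auto
        then have "p = (mono_ind A - mono_ind (r A)) - (mono_ind B - mono_ind (r B))"
          using bin(2) by simp
        then show ?thesis using h2 AB False bb vs.span_diff by metis
      qed
    next
      case mon
      have "m + {#S, T#} \<in> Mon" using mon unfolding Mon_def monomials_deg_def by auto
      moreover have "isbad (m + {#S, T#})" using mon unfolding isbad_def by blast
      ultimately show ?thesis using h1 mon by simp
    qed
  qed
  have chain: "(N, N') \<in> (mv X k)\<^sup>* \<Longrightarrow> mono_ind N - mono_ind N' \<in> vs.span (Kgens V E k)" for N N'
  proof (induction rule: rtrancl_induct)
    case base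
    have "mono_ind N - mono_ind N = (0::nat set multiset \<Rightarrow> 'a)" by simp
    then show ?case by (simp only: vs.span_zero)
  next
    case (step y z)
    obtain m S1 S2 S3 S4 where c: "m \<in> monomials_deg X (k - 2)" "2 \<le> k"
        "S1 \<in> X" "S2 \<in> X" "S3 \<in> X" "S4 \<in> X"
        "S1 \<inter> S2 = {}" "S3 \<inter> S4 = {}" "S1 \<union> S2 = S3 \<union> S4"
        "y = m + {#S1, S2#}" "z = m + {#S3, S4#}" using step(2) unfolding mv_def by blast
    have "mono_ind y - mono_ind z \<in> Kgens V E k"
      unfolding Kgens_def X_def[symmetric] c(10,11)
      by (rule UnI1, rule CollectI, intro exI conjI, rule refl) (use c in auto)
    then have "mono_ind y - mono_ind z \<in> vs.span (Kgens V E k)" by (rule vs.span_base)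
    then have "(mono_ind N - mono_ind y) + (mono_ind y - mono_ind z) \<in> vs.span (Kgens V E k)"
      using step(3) by (rule vs.span_add[rotated])
    moreover have "(mono_ind N - mono_ind y) + (mono_ind y - mono_ind z) = (mono_ind N - mono_ind z :: nat set multiset \<Rightarrow> 'a)"
      by (simp add: algebra_simps)
    ultimately show ?case by metis
  qed
  have g2: "Bk \<subseteq> vs.span (Kgens V E k)"
  proof
    fix p assume "p \<in> Bk"
    then consider (b) N where "N \<in> Bad" "p = mono_ind N" | (g) N where "p = mono_ind N - mono_ind (r N)"
      unfolding Bk_def by blast
    then show "p \<in> vs.span (Kgens V E k)"
    proof cases
      case b
      then obtain m S T where "m \<in> monomials_deg X (k - 2)" "2 \<le> k" "S \<in> X" "T \<in> X" "S \<inter> T \<noteq> {}"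
        "N = m + {#S, T#}" using bad_decomp[of N X k] unfolding Bad_def Mon_def by auto
      then have "p \<in> Kgens V E k" using b(2) unfolding Kgens_def X_def[symmetric]
        by (intro UnI2) blast
      then show ?thesis by (rule vs.span_base)
    next
      case g
      then show ?thesis using chain[OF rep_R[of N X k]] r_def by simp
    qed
  qed
  have "vs.dim {p::nat set multiset\<Rightarrow>'a. \<forall>N. N\<notin>Mon \<longrightarrow> p N = 0} - vs.dim (Kgens V E k)
     = card (r ` (Mon - Bad))"
    by (rule dim_count[OF finM _ rr g1[unfolded Bk_def] g2[unfolded Bk_def]]) (simp add: Bad_def)
  then have "vs.dim {p::nat set multiset\<Rightarrow>'a. \<forall>N. N\<notin>Mon \<longrightarrow> p N = 0} - vs.dim (Kgens V E k)
     = card (r ` {N \<in> Mon. \<not> isbad N})" by (simp only: MB)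
  then show ?thesis
    unfolding hilbK_def Rdeg_def r_def Mon_def X_def by simp
qed

definition cls :: "nat set \<Rightarrow> (nat \<Rightarrow> nat) \<Rightarrow> nat \<Rightarrow> nat set" where
  "cls W f i = {x \<in> W. f x = i}"

definition mon :: "nat set \<Rightarrow> nat \<Rightarrow> (nat \<Rightarrow> nat) \<Rightarrow> nat set multiset" where
  "mon W k f = image_mset (cls W f) (mset_set {1..k})"

lemma adj_sym: "adj E u v = adj E v u"
  by (auto simp: adj_def insert_commute)

lemma cls_stable:
  assumes "f \<in> colorings W E k" "W \<subseteq> V"
  shows "cls W f i \<in> stables V E"
  using assms unfolding cls_def stables_def stable_def colorings_def by (auto; metis)

lemma mon_good:
  assumes f: "f \<in> colorings W E k" and WV: "W \<subseteq> V"
  shows "mon W k f \<in> monomials_deg (stables V E) k \<and> \<not> isbad (mon W k f) \<and> \<Union>(set_mset (mon W k f)) = W"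
proof -
  have "mon W k f \<in> monomials_deg (stables V E) k"
    using cls_stable[OF f WV] by (auto simp: mon_def monomials_deg_def)
  moreover have "\<not> isbad (mon W k f)"
  proof
    assume "isbad (mon W k f)"
    then obtain m S T where mst: "mon W k f = m + {#S, T#}" "S \<inter> T \<noteq> {}" unfolding isbad_def by blast
    then obtain i j where "i \<noteq> j" "cls W f i = S" "cls W f j = T"
      using two_idx[of "{1..k}" "cls W f" m S T] unfolding mon_def by auto
    then show False using mst(2) by (auto simp: cls_def)
  qed
  moreover have "\<Union>(set_mset (mon W k f)) = W"
  proof
    show "\<Union>(set_mset (mon W k f)) \<subseteq> W" by (auto simp: mon_def cls_def)
    show "W \<subseteq> \<Union>(set_mset (mon W k f))"
    proof
      fix x assume x: "x \<in> W"
      then have "f x \<in> {1..k}" using f by (auto simp: colorings_def PiE_iff)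
      moreover have "x \<in> cls W f (f x)" using x by (simp add: cls_def)
      ultimately show "x \<in> \<Union>(set_mset (mon W k f))" by (auto simp: mon_def)
    qed
  qed
  ultimately show ?thesis by blast
qed

lemma mon_surj:
  assumes N: "N \<in> monomials_deg (stables V E) k" "\<not> isbad N" "\<Union>(set_mset N) = W"
  shows "\<exists>f\<in>colorings W E k. mon W k f = N"
proof -
  define K where "K = {1..k}"
  have sz: "size N = k" using N(1) by (simp add: monomials_deg_def)
  obtain xs where xs: "mset xs = N" using ex_mset by blast
  have len: "length xs = k" using xs sz by auto
  define L where "L i = xs ! (i - 1)" for i
  have "map L [1..<Suc k] = xs"
    by (rule nth_equalityI) (simp_all add: L_def len del: upt_Suc)
  then have NL: "N = image_mset L (mset_set K)"
    using xs unfolding K_def by (metis mset_map mset_upt atLeastLessThanSuc_atLeastAtMost)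
  have stabL: "L i \<in> stables V E" if "i \<in> K" for i
    using N(1) NL that by (auto simp: monomials_deg_def K_def)
  have disj: "L i \<inter> L j = {}" if "i \<in> K" "j \<in> K" "i \<noteq> j" for i j
  proof (rule ccontr)
    assume ne: "L i \<inter> L j \<noteq> {}"
    have "N = image_mset L (mset_set (K - {i, j})) + {#L i, L j#}"
      using NL img_split2[of K i j L] that by (simp add: K_def)
    then have "isbad N" using ne unfolding isbad_def by blast
    with N(2) show False ..
  qed
  have unL: "\<Union>(L ` K) = W" using N(3) NL by (simp add: K_def)
  have ex1: "\<exists>!i. i \<in> K \<and> x \<in> L i" if "x \<in> W" for x
    using that unL disj by blast
  define f where "f = restrict (\<lambda>x. THE i. i \<in> K \<and> x \<in> L i) W"
  have fx: "f x \<in> K \<and> x \<in> L (f x)" if "x \<in> W" for x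
    using theI'[OF ex1[OF that]] that by (simp add: f_def)
  have clsL: "cls W f i = L i" if "i \<in> K" for i
  proof
    show "cls W f i \<subseteq> L i" using fx by (auto simp: cls_def)
    show "L i \<subseteq> cls W f i"
    proof
      fix x assume x: "x \<in> L i"
      then have xW: "x \<in> W" using unL that by blast
      then have "f x = i" using fx[OF xW] x that ex1[OF xW] by blast
      then show "x \<in> cls W f i" using xW by (simp add: cls_def)
    qed
  qed
  have fcol: "f \<in> colorings W E k"
  proof -
    have "\<forall>x\<in>W. (THE i. i \<in> K \<and> x \<in> L i) \<in> {1..k}" using fx by (simp add: f_def K_def)
    then have "f \<in> W \<rightarrow>\<^sub>E {1..k}" by (simp add: f_def)
    moreover have "\<forall>u\<in>W. \<forall>v\<in>W. adj E u v \<longrightarrow> f u \<noteq> f v"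
    proof (intro ballI impI)
      fix u v assume u: "u \<in> W" and v: "v \<in> W" and a: "adj E u v"
      show "f u \<noteq> f v"
      proof
        assume "f u = f v"
        then have "u \<in> L (f u)" "v \<in> L (f u)" "f u \<in> K" using fx[OF u] fx[OF v] by auto
        then show False using stabL a by (auto simp: stables_def stable_def)
      qed
    qed
    ultimately show ?thesis by (simp add: colorings_def)
  qed
  have "mon W k f = image_mset L (mset_set K)"
    unfolding mon_def K_def[symmetric] using clsL by (intro image_mset_cong) (simp add: K_def)
  then show ?thesis using fcol NL by auto
qed

lemma keq_trans:
  "(f, g) \<in> kempe_equiv W E k \<Longrightarrow> (g, h) \<in> kempe_equiv W E k \<Longrightarrow> (f, h) \<in> kempe_equiv W E k"
  unfolding kempe_equiv_def by (auto intro: rtrancl_trans)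

lemma keq_refl: "f \<in> colorings W E k \<Longrightarrow> (f, f) \<in> kempe_equiv W E k"
  unfolding kempe_equiv_def by auto

lemma step_keq: "(f, g) \<in> kempe_step W E k \<Longrightarrow> g \<in> colorings W E k \<Longrightarrow> (f, g) \<in> kempe_equiv W E k"
proof -
  assume st: "(f, g) \<in> kempe_step W E k" and g: "g \<in> colorings W E k"
  have f: "f \<in> colorings W E k" using st by (simp add: kempe_step_def)
  have "(f, g) \<in> (kempe_step W E k \<union> (kempe_step W E k)\<inverse>)\<^sup>*"
    using st by (intro r_into_rtrancl UnI1)
  then show ?thesis using f g by (simp add: kempe_equiv_def)
qed

lemma switch_col:
  assumes f: "f \<in> colorings W E k" and C: "kempe_component W E f i j C"
    and ij: "i \<in> {1..k}" "j \<in> {1..k}"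
  shows "kempe_switch f i j C \<in> colorings W E k"
proof -
  define Rl where "Rl = {(x, y). x \<in> W \<and> y \<in> W \<and> f x \<in> {i, j} \<and> f y \<in> {i, j} \<and> adj E x y}"
  obtain v where v: "v \<in> W" "f v \<in> {i, j}" and Cd: "C = {w \<in> W. f w \<in> {i, j} \<and> (v, w) \<in> Rl\<^sup>*}"
    using C unfolding kempe_component_def Rl_def by blast
  have CW: "C \<subseteq> W" "\<forall>w\<in>C. f w \<in> {i, j}" using Cd by auto
  have clos: "w \<in> C" if "u \<in> C" "w \<in> W" "f w \<in> {i, j}" "adj E u w" for u w
  proof -
    have "(v, u) \<in> Rl\<^sup>*" using that(1) Cd by auto
    moreover have "(u, w) \<in> Rl" using that CW unfolding Rl_def by auto
    ultimately have "(v, w) \<in> Rl\<^sup>*" by (rule rtrancl_into_rtrancl)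
    then show ?thesis using that Cd by auto
  qed
  define g where "g = kempe_switch f i j C"
  have fP: "f \<in> W \<rightarrow>\<^sub>E {1..k}" and fprop: "\<forall>u\<in>W. \<forall>w\<in>W. adj E u w \<longrightarrow> f u \<noteq> f w"
    using f by (auto simp: colorings_def)
  have "g \<in> W \<rightarrow>\<^sub>E {1..k}"
    using fP ij CW unfolding PiE_iff extensional_def by (auto simp: g_def kempe_switch_def)
  moreover have "\<forall>u\<in>W. \<forall>w\<in>W. adj E u w \<longrightarrow> g u \<noteq> g w"
  proof (intro ballI impI)
    fix u w assume u: "u \<in> W" and w: "w \<in> W" and a: "adj E u w"
    have ne: "f u \<noteq> f w" using fprop u w a by blast
    have c1: "u \<in> C \<Longrightarrow> f w \<in> {i, j} \<Longrightarrow> w \<in> C" using clos w a by blast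
    have c2: "w \<in> C \<Longrightarrow> f u \<in> {i, j} \<Longrightarrow> u \<in> C" using clos u a adj_sym by metis
    show "g u \<noteq> g w" using ne c1 c2 CW by (auto simp: g_def kempe_switch_def split: if_splits)
  qed
  ultimately show ?thesis by (simp add: g_def colorings_def)
qed

lemma step_col:
  assumes st: "(f, g) \<in> kempe_step W E k"
  shows "f \<in> colorings W E k \<and> g \<in> colorings W E k"
proof -
  have f: "f \<in> colorings W E k" using st by (simp add: kempe_step_def)
  from st consider (sw) i j C where "1 \<le> i" "i < j" "j \<le> k" "kempe_component W E f i j C" "g = kempe_switch f i j C"
    | (pm) \<sigma> where "bij_betw \<sigma> {1..k} {1..k}" "g = restrict (\<sigma> \<circ> f) W"
    by (auto simp: kempe_step_def)
  then show ?thesis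
  proof cases
    case sw then show ?thesis using f switch_col[of f W E k i j C] by auto
  next
    case pm
    have fP: "f \<in> W \<rightarrow>\<^sub>E {1..k}" and fprop: "\<forall>u\<in>W. \<forall>w\<in>W. adj E u w \<longrightarrow> f u \<noteq> f w"
      using f by (auto simp: colorings_def)
    have inj: "inj_on \<sigma> {1..k}" using pm(1) bij_betw_imp_inj_on by blast
    have "g \<in> W \<rightarrow>\<^sub>E {1..k}" using pm fP bij_betwE[OF pm(1)] by (auto simp: PiE_iff)
    moreover have "\<forall>u\<in>W. \<forall>w\<in>W. adj E u w \<longrightarrow> g u \<noteq> g w"
    proof (intro ballI impI)
      fix u w assume u: "u \<in> W" and w: "w \<in> W" and a: "adj E u w"
      have "f u \<noteq> f w" "f u \<in> {1..k}" "f w \<in> {1..k}" using fprop fP u w a by auto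
      then have "\<sigma> (f u) \<noteq> \<sigma> (f w)" using inj by (meson inj_on_contraD)
      then show "g u \<noteq> g w" using pm(2) u w by simp
    qed
    ultimately show ?thesis using f by (simp add: colorings_def)
  qed
qed

lemma step_mv:
  assumes st: "(f, g) \<in> kempe_step W E k" and WV: "W \<subseteq> V"
  shows "(mon W k f, mon W k g) \<in> (mv (stables V E) k)\<^sup>*"
proof -
  have fg: "f \<in> colorings W E k" "g \<in> colorings W E k" using step_col[OF st] by auto
  from st consider (sw) i j C where "1 \<le> i" "i < j" "j \<le> k" "g = kempe_switch f i j C"
    | (pm) \<sigma> where "bij_betw \<sigma> {1..k} {1..k}" "g = restrict (\<sigma> \<circ> f) W"
    by (auto simp: kempe_step_def)
  then show ?thesis
  proof cases
    case sw
    define K where "K = {1..k}"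
    have ijK: "i \<in> K" "j \<in> K" "i \<noteq> j" using sw by (auto simp: K_def)
    have cl: "cls W g l = cls W f l" if "l \<notin> {i, j}" for l
      using that sw(4) by (auto simp: cls_def kempe_switch_def)
    have un: "cls W f i \<union> cls W f j = cls W g i \<union> cls W g j"
      using sw(4) by (auto simp: cls_def kempe_switch_def)
    have dj: "cls W f i \<inter> cls W f j = {}" "cls W g i \<inter> cls W g j = {}"
      using ijK by (auto simp: cls_def)
    define m where "m = image_mset (cls W f) (mset_set (K - {i, j}))"
    have mf: "mon W k f = m + {#cls W f i, cls W f j#}"
      unfolding mon_def K_def[symmetric] m_def by (rule img_split2) (use ijK in \<open>auto simp: K_def\<close>)
    have "mon W k g = image_mset (cls W g) (mset_set (K - {i, j})) + {#cls W g i, cls W g j#}"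
      unfolding mon_def K_def[symmetric] by (rule img_split2) (use ijK in \<open>auto simp: K_def\<close>)
    also have "image_mset (cls W g) (mset_set (K - {i, j})) = m"
      unfolding m_def by (rule image_mset_cong) (use cl in \<open>auto simp: K_def\<close>)
    finally have mg: "mon W k g = m + {#cls W g i, cls W g j#}" .
    have cK: "card (K - {i, j}) = k - 2"
    proof -
      have "card (K - {i, j}) = card K - card {i, j}" using ijK by (intro card_Diff_subset) (auto simp: K_def)
      then show ?thesis using ijK by (simp add: K_def)
    qed
    have mdeg: "m \<in> monomials_deg (stables V E) (k - 2)"
      using cls_stable[OF fg(1) WV] cK by (auto simp: m_def monomials_deg_def K_def)
    have k2: "2 \<le> k" using sw(1-3) by linarith
    have "(mon W k f, mon W k g) \<in> mv (stables V E) k"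
      unfolding mv_def mem_Collect_eq case_prod_conv
      by (rule exI[of _ m], rule exI[of _ "cls W f i"], rule exI[of _ "cls W f j"],
          rule exI[of _ "cls W g i"], rule exI[of _ "cls W g j"])
        (intro conjI mdeg k2 cls_stable[OF fg(1) WV] cls_stable[OF fg(2) WV] dj un mf mg)
    then show ?thesis by (rule r_into_rtrancl)
  next
    case pm
    have inj: "inj_on \<sigma> {1..k}" using pm(1) bij_betw_imp_inj_on by blast
    have im: "\<sigma> ` {1..k} = {1..k}" using pm(1) bij_betw_imp_surj_on by blast
    have fP: "f \<in> W \<rightarrow>\<^sub>E {1..k}" using fg by (simp add: colorings_def)
    have c: "cls W g (\<sigma> i) = cls W f i" if "i \<in> {1..k}" for i
    proof -
      have "\<forall>x\<in>W. g x = \<sigma> i \<longleftrightarrow> f x = i"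
      proof
        fix x assume x: "x \<in> W"
        then have "f x \<in> {1..k}" using fP by auto
        moreover have "g x = \<sigma> (f x)" using pm(2) x by simp
        ultimately show "g x = \<sigma> i \<longleftrightarrow> f x = i" using inj_on_eq_iff[OF inj _ that] by simp
      qed
      then show ?thesis by (auto simp: cls_def)
    qed
    have "mon W k g = image_mset (cls W g) (image_mset \<sigma> (mset_set {1..k}))"
      unfolding mon_def image_mset_mset_set[OF inj] im ..
    also have "\<dots> = image_mset (cls W f) (mset_set {1..k})"
      unfolding multiset.map_comp by (rule image_mset_cong) (use c in auto)
    finally show ?thesis by (simp add: mon_def)
  qed
qed

lemma keq_mv:
  assumes "(f, g) \<in> kempe_equiv W E k" "W \<subseteq> V"
  shows "(mon W k f, mon W k g) \<in> (mv (stables V E) k)\<^sup>*"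
proof -
  have f: "f \<in> colorings W E k" and ch: "(f, g) \<in> (kempe_step W E k \<union> (kempe_step W E k)\<inverse>)\<^sup>*"
    using assms(1) by (auto simp: kempe_equiv_def)
  from ch have "g \<in> colorings W E k \<and> (mon W k f, mon W k g) \<in> (mv (stables V E) k)\<^sup>*"
  proof (induction rule: rtrancl_induct)
    case base then show ?case using f by simp
  next
    case (step y z)
    from step(2) show ?case
    proof
      assume yz: "(y, z) \<in> kempe_step W E k"
      have z: "z \<in> colorings W E k" using step_col[OF yz] by blast
      have "(mon W k f, mon W k z) \<in> (mv (stables V E) k)\<^sup>*"
        using rtrancl_trans[OF conjunct2[OF step(3)] step_mv[OF yz assms(2)]] .
      then show ?case using z by blast
    next
      assume "(y, z) \<in> (kempe_step W E k)\<inverse>"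
      then have yz: "(z, y) \<in> kempe_step W E k" by simp
      have "(mon W k y, mon W k z) \<in> (mv (stables V E) k)\<^sup>*" using step_mv[OF yz assms(2)] by (rule mvs_sym)
      have z: "z \<in> colorings W E k" using step_col[OF yz] by blast
      have "(mon W k f, mon W k z) \<in> (mv (stables V E) k)\<^sup>*"
        using rtrancl_trans[OF conjunct2[OF step(3)] \<open>(mon W k y, mon W k z) \<in> _\<close>] .
      then show ?case using z by blast
    qed
  qed
  then show ?thesis by simp
qed

lemma kempe_fix:
  assumes "f \<in> colorings W E k" "i \<in> {1..k}" "j \<in> {1..k}" "i \<noteq> j" "h \<in> W \<rightarrow>\<^sub>E {1..k}"
    "\<forall>x\<in>W. f x \<notin> {i, j} \<longrightarrow> h x = f x"
    "\<forall>x\<in>W. f x \<in> {i, j} \<longrightarrow> h x \<in> {i, j}"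
    "\<forall>u\<in>W. \<forall>v\<in>W. f u \<in> {i, j} \<longrightarrow> f v \<in> {i, j} \<longrightarrow> adj E u v \<longrightarrow> h u \<noteq> h v"
    "finite W"
  shows "(f, h) \<in> kempe_equiv W E k"
  using assms
proof (induction "card {x \<in> W. f x \<noteq> h x}" arbitrary: f rule: less_induct)
  case less
  note f = less.prems(1)
  have fP: "f \<in> W \<rightarrow>\<^sub>E {1..k}" and fprop: "\<forall>u\<in>W. \<forall>w\<in>W. adj E u w \<longrightarrow> f u \<noteq> f w"
    using f by (auto simp: colorings_def)
  show ?case
  proof (cases "{x \<in> W. f x \<noteq> h x} = {}")
    case True
    then have "f = h" using fP less.prems(5) by (intro PiE_ext) auto
    then show ?thesis using keq_refl f by simp
  next
    case False
    then obtain x0 where x0: "x0 \<in> W" "f x0 \<noteq> h x0" by auto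
    have fx0: "f x0 \<in> {i, j}" using x0 less.prems(6) by auto
    define i' where "i' = min i j"
    define j' where "j' = max i j"
    have ij': "{i', j'} = {i, j}" "1 \<le> i'" "i' < j'" "j' \<le> k"
      using less.prems(2-4) by (auto simp: i'_def j'_def min_def max_def)
    define Rl where "Rl = {(x, y). x \<in> W \<and> y \<in> W \<and> f x \<in> {i, j} \<and> f y \<in> {i, j} \<and> adj E x y}"
    define C where "C = {w \<in> W. f w \<in> {i, j} \<and> (x0, w) \<in> Rl\<^sup>*}"
    have comp: "kempe_component W E f i' j' C"
      unfolding kempe_component_def ij'(1) C_def Rl_def using x0 fx0 by blast
    define g where "g = kempe_switch f i' j' C"
    have stp: "(f, g) \<in> kempe_step W E k"
      unfolding kempe_step_def using f ij' comp g_def by blast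
    have gcol: "g \<in> colorings W E k" using step_col[OF stp] by simp
    have diffC: "f w \<noteq> h w" if "(x0, w) \<in> Rl\<^sup>*" for w
      using that
    proof (induction rule: rtrancl_induct)
      case base then show ?case using x0 by simp
    next
      case (step y z)
      have yz: "y \<in> W" "z \<in> W" "f y \<in> {i, j}" "f z \<in> {i, j}" "adj E y z" using step(2) Rl_def by auto
      have "f y \<noteq> f z" using fprop yz by blast
      moreover have "h y \<noteq> h z" using less.prems(8) yz by blast
      moreover have "h y \<in> {i, j}" "h z \<in> {i, j}" using less.prems(7) yz by auto
      moreover have "f y \<noteq> h y" using step.IH .
      ultimately show ?case using yz by auto
    qed
    have Csub: "C \<subseteq> W" "\<forall>w\<in>C. f w \<in> {i, j}" "x0 \<in> C" using C_def x0 fx0 by auto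
    have ij'ne: "i' \<noteq> j'" using ij' by simp
    have gC: "g w = h w" if "w \<in> C" for w
    proof -
      have "f w \<noteq> h w" using diffC that C_def by auto
      moreover have "f w \<in> {i', j'}" "h w \<in> {i', j'}" using Csub that less.prems(7) ij'(1) by auto
      ultimately show ?thesis using that ij'ne unfolding g_def kempe_switch_def by auto
    qed
    have gnC: "g w = f w" if "w \<notin> C" for w by (simp add: g_def kempe_switch_def that)
    have gij: "g w \<in> {i, j} \<longleftrightarrow> f w \<in> {i, j}" for w
    proof (cases "w \<in> C")
      case True
      then have "f w \<in> {i', j'}" using Csub ij'(1) by auto
      then have "g w \<in> {i', j'}" using True unfolding g_def kempe_switch_def by auto
      then show ?thesis using True Csub ij'(1) by auto
    qed (simp add: gnC)
    have eqD: "{x \<in> W. g x \<noteq> h x} = {x \<in> W. f x \<noteq> h x} - C"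
    proof -
      have "g x \<noteq> h x \<longleftrightarrow> f x \<noteq> h x \<and> x \<notin> C" for x
        using gC[of x] gnC[of x] diffC C_def by (cases "x \<in> C") auto
      then show ?thesis by auto
    qed
    have finD: "finite {x \<in> W. f x \<noteq> h x}" using less.prems(9) by simp
    have x0D: "x0 \<in> {x \<in> W. f x \<noteq> h x}" "x0 \<in> C" using x0 Csub by simp_all
    have sub: "{x \<in> W. g x \<noteq> h x} \<subset> {x \<in> W. f x \<noteq> h x}"
      unfolding eqD using x0D by blast
    have lt: "card {x \<in> W. g x \<noteq> h x} < card {x \<in> W. f x \<noteq> h x}"
      by (rule psubset_card_mono[OF finD sub])
    have "(g, h) \<in> kempe_equiv W E k"
    proof (rule less.hyps[OF lt gcol less.prems(2-5)])
      show "\<forall>x\<in>W. g x \<notin> {i, j} \<longrightarrow> h x = g x"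
      proof (intro ballI impI)
        fix x assume x: "x \<in> W" "g x \<notin> {i, j}"
        then have fx: "f x \<notin> {i, j}" using gij by blast
        then have "x \<notin> C" using Csub by blast
        then show "h x = g x" using gnC less.prems(6) x fx by simp
      qed
      show "\<forall>x\<in>W. g x \<in> {i, j} \<longrightarrow> h x \<in> {i, j}" using gij less.prems(7) by blast
      show "\<forall>u\<in>W. \<forall>v\<in>W. g u \<in> {i, j} \<longrightarrow> g v \<in> {i, j} \<longrightarrow> adj E u v \<longrightarrow> h u \<noteq> h v"
        using gij less.prems(8) by blast
      show "finite W" by (rule less.prems(9))
    qed
    then show ?thesis using step_keq[OF stp gcol] keq_trans by blast
  qed
qed

lemma perm_keq:
  assumes f: "f \<in> colorings W E k" and g: "g \<in> colorings W E k" and eq: "mon W k f = mon W k g"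
  shows "(f, g) \<in> kempe_equiv W E k"
proof -
  obtain \<sigma> where s: "bij_betw \<sigma> {1..k} {1..k}" "\<forall>i\<in>{1..k}. cls W g (\<sigma> i) = cls W f i"
    using img_perm[of "{1..k}" "{1..k}" "cls W f" "cls W g"] eq by (auto simp: mon_def)
  have fP: "f \<in> W \<rightarrow>\<^sub>E {1..k}" "g \<in> W \<rightarrow>\<^sub>E {1..k}" using f g by (auto simp: colorings_def)
  have "g = restrict (\<sigma> \<circ> f) W"
  proof (rule PiE_ext[OF fP(2)])
    show "restrict (\<sigma> \<circ> f) W \<in> W \<rightarrow>\<^sub>E {1..k}" using fP(1) bij_betwE[OF s(1)] by (auto simp: PiE_iff)
  next
    fix x assume x: "x \<in> W"
    have fx: "f x \<in> {1..k}" using fP x by auto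
    have "x \<in> cls W f (f x)" using x by (simp add: cls_def)
    then have "x \<in> cls W g (\<sigma> (f x))" using s(2) fx by simp
    then show "g x = restrict (\<sigma> \<circ> f) W x" using x by (simp add: cls_def)
  qed
  then have "(f, g) \<in> kempe_step W E k" using f s(1) unfolding kempe_step_def by blast
  then show ?thesis using g step_keq by blast
qed

lemma mv_keq:
  assumes f: "f \<in> colorings W E k" and WV: "W \<subseteq> V" and finV: "finite V"
    and mvv: "(mon W k f, N') \<in> mv (stables V E) k"
  shows "\<exists>h\<in>colorings W E k. (f, h) \<in> kempe_equiv W E k \<and> mon W k h = N'"
proof -
  obtain m S1 S2 S3 S4 where c: "m \<in> monomials_deg (stables V E) (k - 2)" "2 \<le> k"
    "S1 \<in> stables V E" "S2 \<in> stables V E" "S3 \<in> stables V E" "S4 \<in> stables V E"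
    "S1 \<inter> S2 = {}" "S3 \<inter> S4 = {}" "S1 \<union> S2 = S3 \<union> S4" "mon W k f = m + {#S1, S2#}" "N' = m + {#S3, S4#}"
    using mvv unfolding mv_def by blast
  obtain i j where ij: "i \<in> {1..k}" "j \<in> {1..k}" "i \<noteq> j" "cls W f i = S1" "cls W f j = S2"
    "m = image_mset (cls W f) (mset_set ({1..k} - {i, j}))"
    using two_idx[of "{1..k}" "cls W f" m S1 S2] c(10) unfolding mon_def by auto
  have D: "S1 \<union> S2 = {x \<in> W. f x \<in> {i, j}}" using ij by (auto simp: cls_def)
  have S34W: "S3 \<subseteq> W" "S4 \<subseteq> W" using D c(9) by auto
  have st34: "\<forall>u\<in>S3. \<forall>v\<in>S3. \<not> adj E u v" "\<forall>u\<in>S4. \<forall>v\<in>S4. \<not> adj E u v"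
    using c(5,6) by (auto simp: stables_def stable_def)
  define h where "h = restrict (\<lambda>x. if x \<in> S3 then i else if x \<in> S4 then j else f x) W"
  have fP: "f \<in> W \<rightarrow>\<^sub>E {1..k}" using f by (simp add: colorings_def)
  have hP: "h \<in> W \<rightarrow>\<^sub>E {1..k}" using fP ij by (auto simp: h_def PiE_iff)
  have keq: "(f, h) \<in> kempe_equiv W E k"
  proof (rule kempe_fix[OF f ij(1-3) hP])
    show "\<forall>x\<in>W. f x \<notin> {i, j} \<longrightarrow> h x = f x" using D c(9) by (auto simp: h_def)
    show "\<forall>x\<in>W. f x \<in> {i, j} \<longrightarrow> h x \<in> {i, j}" by (auto simp: h_def)
    show "\<forall>u\<in>W. \<forall>v\<in>W. f u \<in> {i, j} \<longrightarrow> f v \<in> {i, j} \<longrightarrow> adj E u v \<longrightarrow> h u \<noteq> h v"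
    proof (intro ballI impI)
      fix u v assume u: "u \<in> W" and v: "v \<in> W" and fu: "f u \<in> {i, j}" and fv: "f v \<in> {i, j}"
        and a: "adj E u v"
      have uv: "u \<in> S3 \<union> S4" "v \<in> S3 \<union> S4" using D c(9) u v fu fv by auto
      show "h u \<noteq> h v"
      proof
        assume huv: "h u = h v"
        have "(u \<in> S3 \<and> v \<in> S3) \<or> (u \<in> S4 \<and> v \<in> S4)"
          using huv uv u v c(8) ij(3) by (auto simp: h_def split: if_splits)
        then show False using st34 a by blast
      qed
    qed
    show "finite W" using finV WV finite_subset by blast
  qed
  have hx: "h x = (if x \<in> S3 then i else if x \<in> S4 then j else f x)" if "x \<in> W" for x
    using that by (simp add: h_def)
  have fD: "x \<in> S3 \<union> S4" if "x \<in> W" "f x \<in> {i, j}" for x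
    using that D c(9) by blast
  have h_i: "cls W h i = S3"
  proof (intro set_eqI iffI)
    fix x assume "x \<in> cls W h i"
    then have x: "x \<in> W" "h x = i" by (auto simp: cls_def)
    show "x \<in> S3"
    proof (rule ccontr)
      assume n3: "x \<notin> S3"
      show False
      proof (cases "x \<in> S4")
        case True then show False using x hx[OF x(1)] n3 ij(3) by simp
      next
        case False
        then have "f x = i" using x hx[OF x(1)] n3 by simp
        then show False using fD[OF x(1)] n3 False by simp
      qed
    qed
  next
    fix x assume x: "x \<in> S3"
    then have "x \<in> W" using S34W by blast
    then show "x \<in> cls W h i" using x hx by (simp add: cls_def)
  qed
  have h_j: "cls W h j = S4"
  proof (intro set_eqI iffI)
    fix x assume "x \<in> cls W h j"
    then have x: "x \<in> W" "h x = j" by (auto simp: cls_def)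
    show "x \<in> S4"
    proof (rule ccontr)
      assume n4: "x \<notin> S4"
      show False
      proof (cases "x \<in> S3")
        case True then show False using x hx[OF x(1)] n4 ij(3) by simp
      next
        case False
        then have "f x = j" using x hx[OF x(1)] n4 by simp
        then show False using fD[OF x(1)] n4 False by simp
      qed
    qed
  next
    fix x assume x: "x \<in> S4"
    then have "x \<in> W" "x \<notin> S3" using S34W c(8) by blast+
    then show "x \<in> cls W h j" using x hx by (simp add: cls_def)
  qed
  have h_l: "cls W h l = cls W f l" if "l \<notin> {i, j}" for l
    using that D c(9) by (auto simp: cls_def h_def)
  have "mon W k h = image_mset (cls W h) (mset_set ({1..k} - {i, j})) + {#cls W h i, cls W h j#}"
    unfolding mon_def by (rule img_split2) (use ij in auto)
  also have "image_mset (cls W h) (mset_set ({1..k} - {i, j})) = m"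
    unfolding ij(6) by (rule image_mset_cong) (use h_l in auto)
  finally have "mon W k h = N'" using h_i h_j c(11) by simp
  moreover have "h \<in> colorings W E k" using keq by (simp add: kempe_equiv_def)
  ultimately show ?thesis using keq by blast
qed

lemma mvs_keq:
  assumes f: "f \<in> colorings W E k" and g: "g \<in> colorings W E k" and WV: "W \<subseteq> V" and finV: "finite V"
    and R: "(mon W k f, mon W k g) \<in> (mv (stables V E) k)\<^sup>*"
  shows "(f, g) \<in> kempe_equiv W E k"
proof -
  have "\<exists>h\<in>colorings W E k. (f, h) \<in> kempe_equiv W E k \<and> mon W k h = N"
    if "(mon W k f, N) \<in> (mv (stables V E) k)\<^sup>*" for N
    using that
  proof (induction rule: rtrancl_induct)
    case base then show ?case using f keq_refl by blast
  next
    case (step y z)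
    then obtain h where h: "h \<in> colorings W E k" "(f, h) \<in> kempe_equiv W E k" "mon W k h = y" by blast
    then obtain h' where "h' \<in> colorings W E k" "(h, h') \<in> kempe_equiv W E k" "mon W k h' = z"
      using mv_keq[OF h(1) WV finV] step(2) by blast
    then show ?case using h keq_trans by blast
  qed
  from this[OF R] obtain h where "h \<in> colorings W E k" "(f, h) \<in> kempe_equiv W E k" "mon W k h = mon W k g"
    by blast
  then show ?thesis using perm_keq g keq_trans by blast
qed

lemma card_quot:
  assumes "R \<subseteq> A \<times> A" "\<forall>x\<in>A. \<forall>y\<in>A. (x, y) \<in> R \<longleftrightarrow> h x = h y"
  shows "card (A // R) = card (h ` A)"
proof -
  define \<phi> where "\<phi> c = {y \<in> A. h y = c}" for c
  have "R `` {x} = \<phi> (h x)" if "x \<in> A" for x using assms that by (auto simp: \<phi>_def)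
  then have "A // R = \<phi> ` (h ` A)" unfolding quotient_def by auto
  moreover have "inj_on \<phi> (h ` A)" by (auto simp: inj_on_def \<phi>_def)
  ultimately show ?thesis by (simp add: card_image)
qed

lemma Kc_count:
  assumes finV: "finite V" and WV: "W \<subseteq> V"
  shows "Kc W E k = card (rep (stables V E) k `
           {N \<in> monomials_deg (stables V E) k. \<not> isbad N \<and> \<Union>(set_mset N) = W})"
proof -
  let ?X = "stables V E"
  have "Kc W E k = card ((\<lambda>f. rep ?X k (mon W k f)) ` colorings W E k)"
    unfolding Kc_def
  proof (rule card_quot)
    show "kempe_equiv W E k \<subseteq> colorings W E k \<times> colorings W E k" by (auto simp: kempe_equiv_def)
    show "\<forall>x\<in>colorings W E k. \<forall>y\<in>colorings W E k.
        (x, y) \<in> kempe_equiv W E k \<longleftrightarrow> rep ?X k (mon W k x) = rep ?X k (mon W k y)"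
    proof (intro ballI)
      fix x y assume x: "x \<in> colorings W E k" and y: "y \<in> colorings W E k"
      show "(x, y) \<in> kempe_equiv W E k \<longleftrightarrow> rep ?X k (mon W k x) = rep ?X k (mon W k y)"
        unfolding rep_iff using keq_mv[OF _ WV, of x y] mvs_keq[OF x y WV finV] by blast
    qed
  qed
  also have "(\<lambda>f. rep ?X k (mon W k f)) ` colorings W E k = rep ?X k ` (mon W k ` colorings W E k)"
    by (simp add: image_image)
  also have "mon W k ` colorings W E k = {N \<in> monomials_deg ?X k. \<not> isbad N \<and> \<Union>(set_mset N) = W}"
  proof
    show "mon W k ` colorings W E k \<subseteq> {N \<in> monomials_deg ?X k. \<not> isbad N \<and> \<Union>(set_mset N) = W}"
      using mon_good[OF _ WV] by blast
    show "{N \<in> monomials_deg ?X k. \<not> isbad N \<and> \<Union>(set_mset N) = W} \<subseteq> mon W k ` colorings W E k"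
    proof
      fix N assume "N \<in> {N \<in> monomials_deg ?X k. \<not> isbad N \<and> \<Union>(set_mset N) = W}"
      then have N: "N \<in> monomials_deg ?X k" "\<not> isbad N" "\<Union>(set_mset N) = W" by simp_all
      obtain f where "f \<in> colorings W E k" "mon W k f = N" using mon_surj[OF N] by blast
      then show "N \<in> mon W k ` colorings W E k" by blast
    qed
  qed
  finally show ?thesis .
qed

lemma main_count:
  fixes V :: "nat set" and E :: "nat set set" and k :: nat
  assumes finV: "finite V"
  shows "hilbK TYPE('a::field) V E k = (\<Sum>W\<in>Pow V. Kc W E k)"
proof -
  define X where "X = stables V E"
  define G where "G = {N \<in> monomials_deg X k. \<not> isbad N}"
  define GW where "GW W = {N \<in> monomials_deg X k. \<not> isbad N \<and> \<Union>(set_mset N) = W}" for W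
  define r where "r = rep X k"
  have h: "hilbK TYPE('a) V E k = card (r ` G)"
    unfolding r_def G_def X_def by (rule hilb_count[OF finV])
  have finMon: "finite (monomials_deg X k)" unfolding X_def using finV
    by (intro finite_monomials finite_stables)
  have unV: "\<Union>(set_mset N) \<in> Pow V" if "N \<in> monomials_deg X k" for N
    using that by (auto simp: monomials_deg_def X_def stables_def stable_def)
  have run: "\<Union>(set_mset (r N)) = \<Union>(set_mset N)" for N
    using mvs_un[OF rep_R[of N X k]] r_def by simp
  have GU: "G = (\<Union>W\<in>Pow V. GW W)"
  proof (intro set_eqI iffI)
    fix N assume "N \<in> G"
    then have N: "N \<in> monomials_deg X k" "\<not> isbad N" by (simp_all add: G_def)
    then have "N \<in> GW (\<Union>(set_mset N))" by (simp add: GW_def)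
    then show "N \<in> (\<Union>W\<in>Pow V. GW W)" using unV[OF N(1)] by blast
  next
    fix N assume "N \<in> (\<Union>W\<in>Pow V. GW W)"
    then show "N \<in> G" by (auto simp: G_def GW_def)
  qed
  have "r ` G = (\<Union>W\<in>Pow V. r ` GW W)" unfolding GU by (rule image_UN)
  then have "card (r ` G) = (\<Sum>W\<in>Pow V. card (r ` GW W))"
  proof (simp only:, intro card_UN_disjoint ballI impI)
    show "finite (Pow V)" using finV by simp
  next
    fix W assume "W \<in> Pow V"
    have "GW W \<subseteq> monomials_deg X k" by (auto simp: GW_def)
    then show "finite (r ` GW W)" using finMon finite_subset by blast
  next
    fix W W' assume "W \<in> Pow V" "W' \<in> Pow V" "W \<noteq> W'"
    show "r ` GW W \<inter> r ` GW W' = {}"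
    proof (rule ccontr)
      assume "r ` GW W \<inter> r ` GW W' \<noteq> {}"
      then obtain N N' where NN: "N \<in> GW W" "N' \<in> GW W'" "r N = r N'" by blast
      then have a: "\<Union>(set_mset N) = W" "\<Union>(set_mset N') = W'" by (simp_all add: GW_def)
      have "W = W'" by (metis a run NN(3))
      then show False using \<open>W \<noteq> W'\<close> by simp
    qed
  qed
  also have "\<dots> = (\<Sum>W\<in>Pow V. Kc W E k)"
  proof (rule sum.cong[OF refl])
    fix W assume "W \<in> Pow V"
    then have "W \<subseteq> V" by simp
    then show "card (r ` GW W) = Kc W E k"
      unfolding r_def GW_def X_def by (rule Kc_count[OF finV, symmetric])
  qed
  finally show ?thesis using h by simp
qed

lemma Kc_cong:
  assumes "\<forall>u\<in>V. \<forall>v\<in>V. adj E u v = adj E' u v"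
  shows "Kc V E k = Kc V E' k"
proof -
  have c: "colorings V E k = colorings V E' k"
    unfolding colorings_def using assms by blast
  have rel: "{(x, y). x \<in> V \<and> y \<in> V \<and> f x \<in> {i, j} \<and> f y \<in> {i, j} \<and> adj E x y}
      = {(x, y). x \<in> V \<and> y \<in> V \<and> f x \<in> {i, j} \<and> f y \<in> {i, j} \<and> adj E' x y}" for f i j
    using assms by blast
  have kc: "kempe_component V E = kempe_component V E'"
    unfolding kempe_component_def rel by (intro ext) (rule refl)
  have ks: "kempe_step V E k = kempe_step V E' k"
    unfolding kempe_step_def c kc ..
  show ?thesis unfolding Kc_def kempe_equiv_def ks c ..
qed

lemma adj_induced: "u \<in> W \<Longrightarrow> v \<in> W \<Longrightarrow> adj (induced_edges E W) u v = adj E u v"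
  by (auto simp: adj_def induced_edges_def)

lemma ind_ind: "U \<subseteq> T \<Longrightarrow> induced_edges (induced_edges E T) U = induced_edges E U"
  by (auto simp: induced_edges_def)

lemma hilb_sum:
  fixes V :: "nat set" and E :: "nat set set" and k :: nat
  assumes finV: "finite V"
  shows "hilbK TYPE('a::field) V E k = (\<Sum>W\<in>Pow V. Kc W (induced_edges E W) k)"
  unfolding main_count[OF finV]
  by (rule sum.cong[OF refl], rule Kc_cong[symmetric]) (simp add: adj_induced)

theorem corollary6p9:
  fixes d :: nat and E :: "nat set set" and k :: nat
  assumes "simple_graph_on {1..d} E"
  shows "hilbK TYPE('a::field) {1..d} E k
           = (\<Sum>W\<in>Pow {1..d}. Kc W (induced_edges E W) k)
       \<and> int (Kc {1..d} E k)
           = (\<Sum>m = 0..d. (-1) ^ (d - m) *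
                (\<Sum>W\<in>{W. W \<subseteq> {1..d} \<and> card W = m}.
                   int (hilbK TYPE('a::field) W (induced_edges E W) k)))"
proof
  show "hilbK TYPE('a::field) {1..d} E k = (\<Sum>W\<in>Pow {1..d}. Kc W (induced_edges E W) k)"
    by (rule hilb_sum) simp
next
  define f where "f U = int (Kc U (induced_edges E U) k)" for U
  define g where "g S = sum f (Pow S)" for S
  have mob: "f {1..d} = (\<Sum>T\<in>Pow {1..d}. (-1) ^ (card {1..d} - card T) * g T)"
    by (rule inclusion_exclusion_mobius) (simp_all add: g_def)
  have gT: "g T = int (hilbK TYPE('a) T (induced_edges E T) k)" if "T \<subseteq> {1..d}" for T
  proof -
    have finT: "finite T" using that finite_subset by blast
    have "hilbK TYPE('a) T (induced_edges E T) k
        = (\<Sum>U\<in>Pow T. Kc U (induced_edges (induced_edges E T) U) k)" by (rule hilb_sum[OF finT])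
    also have "\<dots> = (\<Sum>U\<in>Pow T. Kc U (induced_edges E U) k)"
      by (rule sum.cong[OF refl]) (simp add: ind_ind)
    finally show ?thesis by (simp add: g_def f_def)
  qed
  have "int (Kc {1..d} E k) = f {1..d}"
  proof -
    have "Kc {1..d} (induced_edges E {1..d}) k = Kc {1..d} E k"
      by (rule Kc_cong) (simp add: adj_induced)
    then show ?thesis unfolding f_def by simp
  qed
  also have "\<dots> = (\<Sum>T\<in>Pow {1..d}. (-1) ^ (d - card T) * g T)" using mob by simp
  also have "\<dots> = (\<Sum>m\<in>{0..d}. \<Sum>T\<in>{T \<in> Pow {1..d}. card T = m}. (-1) ^ (d - card T) * g T)"
  proof (rule sum.group[symmetric])
    show "finite (Pow {1..d})" by simp
    show "finite {0..d}" by simp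
    show "card ` Pow {1..d} \<subseteq> {0..d}"
    proof
      fix m assume "m \<in> card ` Pow {1..d}"
      then obtain T where "T \<subseteq> {1..d}" "m = card T" by auto
      then have "m \<le> card {1..d}" using card_mono[of "{1..d}" T] by simp
      then show "m \<in> {0..d}" by simp
    qed
  qed
  also have "\<dots> = (\<Sum>m = 0..d. (-1) ^ (d - m) *
                (\<Sum>W\<in>{W. W \<subseteq> {1..d} \<and> card W = m}.
                   int (hilbK TYPE('a::field) W (induced_edges E W) k)))"
  proof (rule sum.cong[OF refl])
    fix m assume "m \<in> {0..d}"
    have st: "{T \<in> Pow {1..d}. card T = m} = {W. W \<subseteq> {1..d} \<and> card W = m}" by auto
    show "(\<Sum>T\<in>{T \<in> Pow {1..d}. card T = m}. (-1) ^ (d - card T) * g T)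
        = (-1) ^ (d - m) * (\<Sum>W\<in>{W. W \<subseteq> {1..d} \<and> card W = m}.
                   int (hilbK TYPE('a::field) W (induced_edges E W) k))"
      unfolding st sum_distrib_left by (rule sum.cong[OF refl]) (simp add: gT)
  qed
  finally show "int (Kc {1..d} E k) = (\<Sum>m = 0..d. (-1) ^ (d - m) *
                (\<Sum>W\<in>{W. W \<subseteq> {1..d} \<and> card W = m}.
                   int (hilbK TYPE('a::field) W (induced_edges E W) k)))" .
qed

end
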